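(* Let $w:\mathbb{Z}\to\mathbb{R}$ be a weight with $w(n)\geq 1$ for all $n$ and $\sup_{n\in\mathbb{Z}}\big(|\tfrac{w(n+1)}{w(n)}|+|\tfrac{w(n)}{w(n+1)}|\big)<\infty$, and fix $1\leq p\leq\infty$. Suppose $(\alpha(n,t),\beta(n,t))$ and $(\tilde\alpha(n,t),\tilde\beta(n,t))$ are arbitrary bounded solutions, defined for $t\in(t_0-T,t_0+T)$, of the Ablowitz--Ladik system \[ -i\alpha_t-(1-\alpha\beta)(\alpha^-+\alpha^+)+2\alpha=0,\qquad -i\beta_t+(1-\alpha\beta)(\beta^-+\beta^+)-2\beta=0. \] If $\|(\alpha(t)-\tilde\alpha(t),\beta(t)-\tilde\beta(t))\|_{w,p}<\infty$ holds for $t=t_0$, then it holds for all $t\in(t_0-T,t_0+T)$.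
   Context: Here $\alpha,\beta,\tilde\alpha,\tilde\beta:\mathbb{Z}\times\mathbb{R}\to\mathbb{C}$ are bounded on $\mathbb{Z}\times(t_0-T,t_0+T)$ and $C^1$ in $t$ for each $n$, and $f^\pm(n,t)=f(n\pm1,t)$. $T>0$ is the length of the local existence interval of the solutions. For pairs of sequences $(\alpha,\beta)$, \[ \|(\alpha,\beta)\|_{w,p}=\Big(\sum_{n\in\mathbb{Z}} w(n)\big(|\alpha(n)|^p+|\beta(n)|^p\big)\Big)^{1/p}\ (1\leq p<\infty),\qquad \|(\alpha,\beta)\|_{w,\infty}=\sup_{n\in\mathbb{Z}} w(n)\big(|\alpha(n)|+|\beta(n)|\big). \] *)

theory Defs
  imports "HOL-Analysis.Analysis"
begin

definition wnorm_finite :: "(int \<Rightarrow> real) \<Rightarrow> ereal \<Rightarrow> (int \<Rightarrow> complex) \<Rightarrow> (int \<Rightarrow> complex) \<Rightarrow> bool" where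
  "wnorm_finite w p a b =
     (if p = \<infinity> then bdd_above (range (\<lambda>n. w n * (norm (a n) + norm (b n))))
      else (\<lambda>n. w n * (norm (a n) powr real_of_ereal p + norm (b n) powr real_of_ereal p))
             summable_on UNIV)"

definition AL_solution :: "real \<Rightarrow> real \<Rightarrow> (int \<Rightarrow> real \<Rightarrow> complex) \<Rightarrow> (int \<Rightarrow> real \<Rightarrow> complex) \<Rightarrow> bool" where
  "AL_solution t0 T \<alpha> \<beta> =
    ((\<exists>M. \<forall>n. \<forall>t\<in>{t0-T<..<t0+T}. norm (\<alpha> n t) \<le> M \<and> norm (\<beta> n t) \<le> M) \<and>
     (\<forall>n. (\<forall>t\<in>{t0-T<..<t0+T}. \<alpha> n differentiable at t \<and> \<beta> n differentiable at t) \<and>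
          continuous_on {t0-T<..<t0+T} (\<lambda>t. vector_derivative (\<alpha> n) (at t)) \<and>
          continuous_on {t0-T<..<t0+T} (\<lambda>t. vector_derivative (\<beta> n) (at t))) \<and>
     (\<forall>n. \<forall>t\<in>{t0-T<..<t0+T}.
        - \<i> * vector_derivative (\<alpha> n) (at t)
          - (1 - \<alpha> n t * \<beta> n t) * (\<alpha> (n-1) t + \<alpha> (n+1) t) + 2 * \<alpha> n t = 0 \<and>
        - \<i> * vector_derivative (\<beta> n) (at t)
          + (1 - \<alpha> n t * \<beta> n t) * (\<beta> (n-1) t + \<beta> (n+1) t) - 2 * \<beta> n t = 0))"

end

theory Submission
  imports Defs
begin


lemma geom_int_summable:
  fixes q :: real assumes "0 \<le> q" "q < 1"
  shows "(\<lambda>j::int. q ^ nat \<bar>j\<bar>) summable_on UNIV"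
proof -
  have g: "(\<lambda>k::nat. q ^ k) summable_on UNIV"
    using assms by (subst summable_on_UNIV_nonneg_real_iff) (auto intro: summable_geometric)
  have 1: "(\<lambda>j::int. q ^ nat \<bar>j\<bar>) summable_on (int ` UNIV)"
    by (subst summable_on_reindex) (auto simp: o_def g)
  have 2: "(\<lambda>j::int. q ^ nat \<bar>j\<bar>) summable_on ((\<lambda>k. - int k) ` UNIV)"
    by (subst summable_on_reindex) (auto simp: o_def g inj_on_def)
  have "UNIV = int ` UNIV \<union> (\<lambda>k. - int k) ` UNIV"
  proof -
    have "x \<in> int ` UNIV \<union> (\<lambda>k. - int k) ` UNIV" for x :: int
    proof (cases "x \<ge> 0")
      case True then show ?thesis by (metis UnI1 nonneg_int_cases rangeI)
    next
      case False then have "x = - int (nat (-x))" by simp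
      then show ?thesis by blast
    qed
    then show ?thesis by blast
  qed
  then show ?thesis using summable_on_union[OF 1 2] by simp
qed

lemma weight_shift:
  fixes w :: "int \<Rightarrow> real"
  assumes K1: "\<And>n. w n \<le> K * w (n+1)" and K2: "\<And>n. w (n+1) \<le> K * w n"
    and pos: "\<And>n. w n > 0" and "K \<ge> 0"
  shows "w n \<le> K ^ nat \<bar>j\<bar> * w (n + j)"
proof -
  have a: "w n \<le> K ^ k * w (n + int k)" for k n
  proof (induction k arbitrary: n)
    case 0 then show ?case by simp
  next
    case (Suc k)
    have "w n \<le> K ^ k * w (n + int k)" by (rule Suc)
    also have "\<dots> \<le> K ^ k * (K * w (n + int k + 1))"
      using K1 \<open>K \<ge> 0\<close> by (intro mult_left_mono) auto
    finally show ?case by (simp add: algebra_simps)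
  qed
  have b: "w n \<le> K ^ k * w (n - int k)" for k n
  proof (induction k arbitrary: n)
    case 0 then show ?case by simp
  next
    case (Suc k)
    have "w n \<le> K ^ k * w (n - int k)" by (rule Suc)
    also have "\<dots> \<le> K ^ k * (K * w (n - int k - 1))"
      using K2[of "n - int k - 1"] \<open>K \<ge> 0\<close> by (intro mult_left_mono) auto
    finally show ?case by (simp add: algebra_simps)
  qed
  show ?thesis
  proof (cases "j \<ge> 0")
    case True then show ?thesis using a[of n "nat j"] by simp
  next
    case False then show ?thesis using b[of n "nat (-j)"] by simp
  qed
qed

lemma deriv_bound:
  fixes f :: "real \<Rightarrow> 'a::real_normed_vector"
  assumes "a < b"
    and f: "\<And>x. x \<in> {a..b} \<Longrightarrow> (f has_vector_derivative f' x) (at x)"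
    and phi: "\<And>x. x \<in> {a..b} \<Longrightarrow> (\<phi> has_real_derivative \<phi>' x) (at x)"
    and bnd: "\<And>x. a < x \<Longrightarrow> x < b \<Longrightarrow> norm (f' x) \<le> \<phi>' x"
  shows "norm (f b - f a) \<le> \<phi> b - \<phi> a"
proof (rule differentiable_bound_general[OF \<open>a < b\<close> _ _ _ _ bnd])
  show "continuous_on {a..b} f"
    using f by (meson continuous_at_imp_continuous_on has_vector_derivative_continuous)
  show "continuous_on {a..b} \<phi>"
    using phi by (meson DERIV_isCont continuous_at_imp_continuous_on)
  show "\<And>x. a < x \<Longrightarrow> x < b \<Longrightarrow> (f has_vector_derivative f' x) (at x)" using f by auto
  show "\<And>x. a < x \<Longrightarrow> x < b \<Longrightarrow> (\<phi> has_vector_derivative \<phi>' x) (at x)"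
    using phi by (simp add: has_real_derivative_iff_has_vector_derivative)
qed



lemma core:
  fixes f g f' g' :: "int \<Rightarrow> real \<Rightarrow> complex" and G :: "int \<Rightarrow> real"
    and U :: "int \<Rightarrow> real \<Rightarrow> real"
  assumes t: "t0 < t1" and c: "c > 0" and mu: "\<mu> > 0"
   and df: "\<And>n s. s \<in> {t0..t1} \<Longrightarrow> (f n has_vector_derivative f' n s) (at s)"
   and dg: "\<And>n s. s \<in> {t0..t1} \<Longrightarrow> (g n has_vector_derivative g' n s) (at s)"
   and bf: "\<And>n s. s \<in> {t0..t1} \<Longrightarrow> norm (f' n s) \<le> c * (U (n-1) s + U n s + U (n+1) s)"
   and bg: "\<And>n s. s \<in> {t0..t1} \<Longrightarrow> norm (g' n s) \<le> c * (U (n-1) s + U n s + U (n+1) s)"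
   and U: "\<And>n s. U n s = norm (f n s) + norm (g n s)"
   and M: "\<And>n s. s \<in> {t0..t1} \<Longrightarrow> U n s \<le> M"
   and G0: "\<And>n. U n t0 \<le> G n"
   and GA: "\<And>n. G (n-1) + G n + G (n+1) \<le> \<mu> * G n"
  shows "U n t1 \<le> exp (2*c*\<mu>*(t1-t0)) * G n"
proof -
  define lam where "lam = 2*c*\<mu>"
  define \<kappa> where "\<kappa> = 6*c"
  have lampos: "lam > 0" using c mu by (simp add: lam_def)
  have Unn: "U n s \<ge> 0" for n s by (simp add: U)
  have Gnn: "G n \<ge> 0" for n using G0[of n] Unn[of n t0] by linarith
  have Mnn: "M \<ge> 0" using M[of t0 0] Unn[of 0 t0] t by auto
  have claim: "\<forall>n. \<forall>s\<in>{t0..t1}. U n s \<le> exp (lam*(s-t0)) * G n + M * (\<kappa>*(s-t0))^m / fact m" for m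
  proof (induction m)
    case 0
    show ?case using M Gnn by (simp add: add_nonneg_nonneg add_increasing)
  next
    case (Suc m)
    show ?case
    proof (intro allI ballI)
      fix n s assume s: "s \<in> {t0..t1}"
      have remnn: "M * (\<kappa>*(s-t0))^(Suc m) / fact (Suc m) \<ge> 0"
        using s Mnn c by (auto simp: \<kappa>_def)
      show "U n s \<le> exp (lam*(s-t0)) * G n + M * (\<kappa>*(s-t0))^(Suc m) / fact (Suc m)"
      proof (cases "s = t0")
        case True then show ?thesis using G0[of n] remnn by simp
      next
        case False
        with s have ts: "t0 < s" by auto
        define \<phi> where "\<phi> x = c*\<mu>*G n/lam * exp (lam*(x-t0)) + 3*c*M*\<kappa>^m*(x-t0)^(Suc m)/fact (Suc m)" for x
        define \<phi>' where "\<phi>' x = c*\<mu>*G n * exp (lam*(x-t0)) + 3*c*M*\<kappa>^m*(x-t0)^m/fact m" for x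
        have dphi: "(\<phi> has_real_derivative \<phi>' x) (at x)" for x
        proof -
          have "(\<phi> has_real_derivative c*\<mu>*G n/lam * (exp (lam*(x-t0)) * (lam * 1))
               + 3*c*M*\<kappa>^m * (of_nat (Suc m) * (x-t0)^m * 1) / fact (Suc m)) (at x)"
            unfolding \<phi>_def by (intro derivative_eq_intros) auto
          moreover have "c*\<mu>*G n/lam * (exp (lam*(x-t0)) * (lam * 1))
               + 3*c*M*\<kappa>^m * (of_nat (Suc m) * (x-t0)^m * 1) / fact (Suc m) = \<phi>' x"
          proof -
            have "3*c*M*\<kappa>^m * (of_nat (Suc m) * (x-t0)^m * 1) / fact (Suc m) = 3*c*M*\<kappa>^m*(x-t0)^m/fact m"
              by (simp only: fact_Suc) (simp del: of_nat_Suc)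
            then show ?thesis using lampos by (simp add: \<phi>'_def)
          qed
          ultimately show ?thesis by simp
        qed
        have bnd: "c * (U (n-1) x + U n x + U (n+1) x) \<le> \<phi>' x" if x: "x \<in> {t0..t1}" for x
        proof -
          let ?R = "M * (\<kappa>*(x-t0))^m / fact m"
          have "U (n-1) x + U n x + U (n+1) x \<le> exp (lam*(x-t0)) * (G (n-1) + G n + G (n+1)) + 3 * ?R"
            using Suc.IH[rule_format, OF x, of "n-1"] Suc.IH[rule_format, OF x, of n] Suc.IH[rule_format, OF x, of "n+1"]
            unfolding distrib_left by linarith
          also have "\<dots> \<le> exp (lam*(x-t0)) * (\<mu> * G n) + 3 * ?R"
            using GA by (intro add_right_mono mult_left_mono) auto
          finally have "c * (U (n-1) x + U n x + U (n+1) x) \<le> c * (exp (lam*(x-t0)) * (\<mu> * G n) + 3 * ?R)"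
            using c by (intro mult_left_mono) auto
          also have "\<dots> = \<phi>' x" by (simp add: \<phi>'_def power_mult_distrib; simp add: field_simps)
          finally show ?thesis .
        qed
        have sub: "{t0..s} \<subseteq> {t0..t1}" using s by auto
        have nf: "norm (f n s - f n t0) \<le> \<phi> s - \<phi> t0"
          by (rule deriv_bound[OF ts, of "f n" "f' n" \<phi> \<phi>'])
             (use df dphi sub in auto, rule order_trans[OF bf bnd], use s in auto)
        have ng: "norm (g n s - g n t0) \<le> \<phi> s - \<phi> t0"
          by (rule deriv_bound[OF ts, of "g n" "g' n" \<phi> \<phi>'])
             (use dg dphi sub in auto, rule order_trans[OF bg bnd], use s in auto)
        have "norm (f n s) \<le> norm (f n t0) + norm (f n s - f n t0)"
          by (metis add.commute diff_add_cancel norm_triangle_ineq)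
        moreover have "norm (g n s) \<le> norm (g n t0) + norm (g n s - g n t0)"
          by (metis add.commute diff_add_cancel norm_triangle_ineq)
        ultimately have "U n s \<le> U n t0 + 2 * (\<phi> s - \<phi> t0)" using nf ng U by simp
        also have "\<dots> \<le> G n + 2 * (\<phi> s - \<phi> t0)" using G0 by simp
        also have "\<dots> = exp (lam*(s-t0)) * G n + M * (\<kappa>*(s-t0))^(Suc m) / fact (Suc m)"
        proof -
          have a: "\<phi> s - \<phi> t0 = c*\<mu>*G n/lam * (exp (lam*(s-t0)) - 1) + 3*c*M*\<kappa>^m*(s-t0)^(Suc m)/fact (Suc m)"
            unfolding \<phi>_def by (simp add: right_diff_distrib)
          have b: "c*\<mu>*G n/lam = G n / 2" using c mu by (simp add: lam_def)
          have k: "3*c = \<kappa>/2" by (simp add: \<kappa>_def)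
          have d: "3*c*M*\<kappa>^m*(s-t0)^(Suc m) = M/2 * (\<kappa>*(s-t0))^(Suc m)"
            unfolding k by (simp add: power_mult_distrib)
          have d2: "3*c*M*\<kappa>^m*(s-t0)^(Suc m)/fact (Suc m) = M/2 * (\<kappa>*(s-t0))^(Suc m) / fact (Suc m)"
            by (simp only: d)
          have gen: "\<And>X F E. G n + 2 * (G n / 2 * (E - 1) + M/2 * X / F) = E * G n + M * X / F"
            by (simp add: algebra_simps diff_divide_distrib)
          show ?thesis unfolding a b d2 by (rule gen)
        qed
        finally show ?thesis .
      qed
    qed
  qed
  have t1: "t1 \<in> {t0..t1}" using t by auto
  have lim: "(\<lambda>m. exp (lam*(t1-t0)) * G n + M * ((\<kappa>*(t1-t0))^m / fact m)) \<longlonglongrightarrow> exp (lam*(t1-t0)) * G n + M * 0"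
  proof (intro tendsto_intros)
    show "(\<lambda>m. (\<kappa>*(t1-t0))^m / fact m) \<longlonglongrightarrow> 0"
      using summable_LIMSEQ_zero [OF summable_exp] by (auto simp add: inverse_eq_divide)
  qed
  have "U n t1 \<le> exp (lam*(t1-t0)) * G n + M * 0"
    by (rule LIMSEQ_le_const[OF lim], rule exI[of _ 0]) (use claim[rule_format, OF t1] in simp)
  then show ?thesis by (simp add: lam_def)
qed



lemma reflect_deriv:
  assumes "(f has_vector_derivative f') (at (2*t0 - s))"
  shows "((\<lambda>s. f (2*t0 - s)) has_vector_derivative (- f')) (at s)"
proof -
  have i: "((\<lambda>s::real. 2*t0 - s) has_vector_derivative (-1)) (at s)"
    by (auto intro!: derivative_eq_intros simp: has_real_derivative_iff_has_vector_derivative[symmetric])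
  from vector_diff_chain_at[OF i, of f f'] assms show ?thesis by (simp add: o_def)
qed

lemma core_both:
  fixes f g f' g' :: "int \<Rightarrow> real \<Rightarrow> complex" and G :: "int \<Rightarrow> real"
    and U :: "int \<Rightarrow> real \<Rightarrow> real"
  assumes c: "c > 0" and mu: "\<mu> > 0" and t: "t \<in> {a<..<b}" and t0: "t0 \<in> {a<..<b}"
   and df: "\<And>n s. s \<in> {a<..<b} \<Longrightarrow> (f n has_vector_derivative f' n s) (at s)"
   and dg: "\<And>n s. s \<in> {a<..<b} \<Longrightarrow> (g n has_vector_derivative g' n s) (at s)"
   and bf: "\<And>n s. s \<in> {a<..<b} \<Longrightarrow> norm (f' n s) \<le> c * (U (n-1) s + U n s + U (n+1) s)"
   and bg: "\<And>n s. s \<in> {a<..<b} \<Longrightarrow> norm (g' n s) \<le> c * (U (n-1) s + U n s + U (n+1) s)"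
   and U: "\<And>n s. U n s = norm (f n s) + norm (g n s)"
   and M: "\<And>n s. s \<in> {a<..<b} \<Longrightarrow> U n s \<le> M"
   and G0: "\<And>n. U n t0 \<le> G n"
   and GA: "\<And>n. G (n-1) + G n + G (n+1) \<le> \<mu> * G n"
  shows "U n t \<le> exp (2*c*\<mu>*\<bar>t-t0\<bar>) * G n"
proof -
  consider "t = t0" | "t0 < t" | "t < t0" by linarith
  then show ?thesis
  proof cases
    case 1
    then show ?thesis using G0 by simp
  next
    case 2
    have sub: "{t0..t} \<subseteq> {a<..<b}" using t t0 by auto
    have "U n t \<le> exp (2*c*\<mu>*(t-t0)) * G n"
      by (rule core[OF 2 c mu, of f f' g g' U M]) (use df dg bf bg U M G0 GA sub in auto)
    then show ?thesis using 2 by simp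
  next
    case 3
    define t1 where "t1 = 2*t0 - t"
    have t1: "t0 < t1" using 3 by (simp add: t1_def)
    have sub: "\<And>s. s \<in> {t0..t1} \<Longrightarrow> 2*t0 - s \<in> {a<..<b}" using t t0 by (auto simp: t1_def)
    have "(\<lambda>n s. U n (2*t0 - s)) n t1 \<le> exp (2*c*\<mu>*(t1-t0)) * G n"
    proof (rule core[OF t1 c mu, of "\<lambda>n s. f n (2*t0 - s)" "\<lambda>n s. - f' n (2*t0 - s)"
          "\<lambda>n s. g n (2*t0 - s)" "\<lambda>n s. - g' n (2*t0 - s)" _ M])
      show "((\<lambda>s. f n (2*t0 - s)) has_vector_derivative - f' n (2*t0 - s)) (at s)" if "s \<in> {t0..t1}" for n s
        by (rule reflect_deriv, rule df, rule sub[OF that])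
      show "((\<lambda>s. g n (2*t0 - s)) has_vector_derivative - g' n (2*t0 - s)) (at s)" if "s \<in> {t0..t1}" for n s
        by (rule reflect_deriv, rule dg, rule sub[OF that])
    qed (use bf bg U M G0 GA sub in auto)
    then show ?thesis using 3 by (simp add: t1_def)
  qed
qed



lemma G_props:
  fixes U0 :: "int \<Rightarrow> real" and \<rho> :: real
  assumes nn: "\<And>n. 0 \<le> U0 n" and bd: "\<And>n. U0 n \<le> M" and r: "0 < \<rho>" "\<rho> \<le> 1"
  defines "G \<equiv> \<lambda>n. (SUP j. \<rho> ^ nat \<bar>j\<bar> * U0 (n+j))"
  shows G_term: "\<rho> ^ nat \<bar>j\<bar> * U0 (n+j) \<le> G n"
    and G_ge: "U0 n \<le> G n"
    and G_nn: "0 \<le> G n"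
    and G_least: "(\<And>j. \<rho> ^ nat \<bar>j\<bar> * U0 (n+j) \<le> B) \<Longrightarrow> G n \<le> B"
    and G_A: "G (n-1) + G n + G (n+1) \<le> (1 + 2/\<rho>) * G n"
proof -
  have bdd: "bdd_above (range (\<lambda>j. \<rho> ^ nat \<bar>j\<bar> * U0 (n+j)))" for n
  proof (rule bdd_aboveI2)
    fix j
    have h1: "\<rho> ^ nat \<bar>j\<bar> \<le> 1" using r by (simp add: power_le_one)
    show "\<rho> ^ nat \<bar>j\<bar> * U0 (n+j) \<le> M"
      using mult_right_mono[OF h1 nn[of "n+j"]] bd[of "n+j"] by simp
  qed
  show Gt: "\<rho> ^ nat \<bar>j\<bar> * U0 (n+j) \<le> G n" for n j
    unfolding G_def by (rule cSUP_upper[OF _ bdd]) simp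
  show "U0 n \<le> G n" using Gt[where j=0 and n=n] by simp
  show Gnn: "0 \<le> G n" for n using Gt[where j=0 and n=n] nn[of n] by simp
  show least: "(\<And>j. \<rho> ^ nat \<bar>j\<bar> * U0 (n+j) \<le> B) \<Longrightarrow> G n \<le> B" for n B
    unfolding G_def by (rule cSUP_least) auto
  have shift: "G (n+s) \<le> G n / \<rho>" if s: "\<bar>s\<bar> = 1" for s
  proof (rule least)
    fix j
    have "nat \<bar>s+j\<bar> \<le> Suc (nat \<bar>j\<bar>)" using s by linarith
    then have "\<rho> ^ Suc (nat \<bar>j\<bar>) \<le> \<rho> ^ nat \<bar>s+j\<bar>" using r by (intro power_decreasing) auto
    then have "\<rho> ^ Suc (nat \<bar>j\<bar>) * U0 (n+(s+j)) \<le> \<rho> ^ nat \<bar>s+j\<bar> * U0 (n+(s+j))"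
      using nn by (rule mult_right_mono)
    then have "\<rho> * (\<rho> ^ nat \<bar>j\<bar> * U0 (n+s+j)) \<le> \<rho> ^ nat \<bar>s+j\<bar> * U0 (n+(s+j))"
      by (simp only: power_Suc mult.assoc add.assoc)
    also have "\<dots> \<le> G n" by (rule Gt)
    finally show "\<rho> ^ nat \<bar>j\<bar> * U0 (n+s+j) \<le> G n / \<rho>" using r by (simp add: pos_le_divide_eq mult.commute)
  qed
  have "G (n-1) \<le> G n / \<rho>" using shift[of "-1"] by simp
  moreover have "G (n+1) \<le> G n / \<rho>" using shift[of 1] by simp
  ultimately show "G (n-1) + G n + G (n+1) \<le> (1 + 2/\<rho>) * G n"
  proof -
    have "(1 + 2/\<rho>) * G n = G n / \<rho> + G n + G n / \<rho>" by (simp add: distrib_right)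
    then show ?thesis using \<open>G (n-1) \<le> G n / \<rho>\<close> \<open>G (n+1) \<le> G n / \<rho>\<close> by linarith
  qed
qed



lemma pow_powr: "0 < (x::real) \<Longrightarrow> (x ^ k) powr p = (x powr p) ^ k"
proof -
  assume x: "0 < x"
  have "(x ^ k) powr p = (x powr real k) powr p" using x by (simp add: powr_realpow)
  also have "\<dots> = x powr (real k * p)" by (simp add: powr_powr)
  also have "\<dots> = (x powr p) ^ k" using x by (simp add: powr_power)
  finally show ?thesis .
qed

lemma G_summable:
  fixes w U0 :: "int \<Rightarrow> real" and p \<rho> K M :: real
  assumes p: "p \<ge> 1" and nn: "\<And>n. 0 \<le> U0 n" and bd: "\<And>n. U0 n \<le> M"
    and r: "0 < \<rho>" "\<rho> \<le> 1" and K: "K \<ge> 1" and rK: "\<rho> * K \<le> 1/2"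
    and wpos: "\<And>n. w n > 0" and wsh: "\<And>n j. w n \<le> K ^ nat \<bar>j\<bar> * w (n+j)"
    and S0: "(\<lambda>n. w n * U0 n powr p) summable_on UNIV"
  shows "(\<lambda>n. w n * (SUP j. \<rho> ^ nat \<bar>j\<bar> * U0 (n+j)) powr p) summable_on UNIV"
proof -
  define G where "G = (\<lambda>n. (SUP j. \<rho> ^ nat \<bar>j\<bar> * U0 (n+j)))"
  define q where "q = \<rho> powr p"
  define V0 where "V0 = (\<lambda>n. U0 n powr p)"
  define f where "f = (\<lambda>n j. w n * (q ^ nat \<bar>j\<bar> * V0 (n+j)))"
  have q0: "0 < q" using r by (simp add: q_def)
  have qr: "q \<le> \<rho>" unfolding q_def using powr_mono'[of 1 p \<rho>] p r by (simp add: powr_one)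
  have "q * K \<le> \<rho> * K" using qr K by (intro mult_right_mono) auto
  then have qK: "q * K \<le> 1/2" using rK by linarith
  have "q * 1 \<le> q * K" using K q0 by (intro mult_left_mono) auto
  then have q1: "q < 1" using qK by linarith
  have V0nn: "0 \<le> V0 n" for n by (simp add: V0_def)
  have V0M: "V0 n \<le> M powr p" for n unfolding V0_def using nn bd p by (intro powr_mono2) auto
  have fnn: "0 \<le> f n j" for n j using wpos[of n] q0 V0nn by (simp add: f_def)
  have geo: "(\<lambda>j::int. c * a ^ nat \<bar>j\<bar>) summable_on UNIV" if "0 \<le> a" "a < 1" for a c :: real
    using geom_int_summable[OF that] by (rule summable_on_cmult_right)
  have sumj: "(\<lambda>j. f n j) summable_on UNIV" for n
  proof (rule summable_on_comparison_test[OF geo[OF less_imp_le[OF q0] q1, of "w n * M powr p"]])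
    fix j :: int
    show "f n j \<le> w n * M powr p * q ^ nat \<bar>j\<bar>"
      using V0M[of "n+j"] wpos[of n] q0 by (simp add: f_def mult_left_mono mult.commute mult.left_commute)
    show "0 \<le> f n j" by (rule fnn)
  qed
  have Sh: "(\<lambda>n. w (n+j) * V0 (n+j)) summable_on UNIV" for j
  proof -
    have "bij_betw (\<lambda>n. n + j) UNIV UNIV"
      by (rule bij_betwI[of _ _ _ "\<lambda>n. n - j"]) auto
    from summable_on_reindex_bij_betw[OF this, of "\<lambda>n. w n * V0 n"] S0
    show ?thesis by (simp add: V0_def)
  qed
  have Sheq: "infsum (\<lambda>n. w (n+j) * V0 (n+j)) UNIV = infsum (\<lambda>n. w n * V0 n) UNIV" for j
  proof -
    have "bij_betw (\<lambda>n. n + j) UNIV UNIV"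
      by (rule bij_betwI[of _ _ _ "\<lambda>n. n - j"]) auto
    from infsum_reindex_bij_betw[OF this, of "\<lambda>n. w n * V0 n"] show ?thesis by simp
  qed
  define S where "S = infsum (\<lambda>n. w n * V0 n) UNIV"
  have fle: "f n j \<le> (q*K) ^ nat \<bar>j\<bar> * (w (n+j) * V0 (n+j))" for n j
  proof -
    have "f n j = q ^ nat \<bar>j\<bar> * V0 (n+j) * w n" by (simp add: f_def)
    also have "\<dots> \<le> q ^ nat \<bar>j\<bar> * V0 (n+j) * (K ^ nat \<bar>j\<bar> * w (n+j))"
      using q0 V0nn by (intro mult_left_mono wsh) auto
    also have "\<dots> = (q*K) ^ nat \<bar>j\<bar> * (w (n+j) * V0 (n+j))" by (simp add: power_mult_distrib)
    finally show ?thesis .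
  qed
  have sumn: "(\<lambda>n. f n j) summable_on UNIV" for j
    by (rule summable_on_comparison_test[OF summable_on_cmult_right[OF Sh[of j]], of _ "(q*K) ^ nat \<bar>j\<bar>"])
       (use fle fnn in auto)
  have gle: "infsum (\<lambda>n. f n j) UNIV \<le> S * (q*K) ^ nat \<bar>j\<bar>" for j
  proof -
    have "infsum (\<lambda>n. f n j) UNIV \<le> infsum (\<lambda>n. (q*K) ^ nat \<bar>j\<bar> * (w (n+j) * V0 (n+j))) UNIV"
      by (rule infsum_mono[OF sumn summable_on_cmult_right[OF Sh]]) (rule fle)
    also have "\<dots> = (q*K) ^ nat \<bar>j\<bar> * S" by (simp add: infsum_cmult_right' Sheq S_def)
    finally show ?thesis by (simp add: mult.commute)
  qed
  have gsum: "(\<lambda>j. infsum (\<lambda>n. f n j) UNIV) summable_on UNIV"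
  proof (rule summable_on_comparison_test[OF geo[of "q*K" S]])
    show "0 \<le> q*K" using q0 K by simp
    show "q*K < 1" using qK by simp
    show "infsum (\<lambda>n. f n j) UNIV \<le> S * (q*K) ^ nat \<bar>j\<bar>" for j by (rule gle)
    show "0 \<le> infsum (\<lambda>n. f n j) UNIV" for j by (rule infsum_nonneg) (use fnn in auto)
  qed
  have sig: "(\<lambda>(j,n). f n j) summable_on Sigma UNIV (\<lambda>_. UNIV)"
    by (rule summable_on_SigmaI[where g = "\<lambda>j. infsum (\<lambda>n. f n j) UNIV"])
       (use sumn gsum fnn in \<open>auto simp: has_sum_infsum\<close>)
  then have sig2: "(\<lambda>(n,j). f n j) summable_on Sigma UNIV (\<lambda>_. UNIV)"
    using summable_on_swap[of "\<lambda>(j,n). f n j" UNIV UNIV] by (simp add: case_prod_unfold)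
  have Hsum: "(\<lambda>n. infsum (\<lambda>j. f n j) UNIV) summable_on UNIV"
    using summable_on_SigmaD[OF sig2] sumj by simp
  define H where "H = (\<lambda>n. infsum (\<lambda>j. q ^ nat \<bar>j\<bar> * V0 (n+j)) UNIV)"
  have Heq: "infsum (\<lambda>j. f n j) UNIV = w n * H n" for n
    by (simp add: f_def H_def infsum_cmult_right')
  have sumjH: "(\<lambda>j. q ^ nat \<bar>j\<bar> * V0 (n+j)) summable_on UNIV" for n
  proof -
    have "(\<lambda>j. (1 / w n) * f n j) summable_on UNIV" by (rule summable_on_cmult_right[OF sumj])
    then show ?thesis using wpos[of n] by (simp add: f_def)
  qed
  have GH: "G n powr p \<le> H n" for n
  proof -
    have Hnn: "0 \<le> H n" unfolding H_def by (rule infsum_nonneg) (use q0 V0nn in auto)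
    have "G n \<le> H n powr (1/p)"
      unfolding G_def
    proof (rule cSUP_least)
      fix j
      have a: "q ^ nat \<bar>j\<bar> * V0 (n+j) \<le> H n"
        unfolding H_def using finite_sum_le_infsum[OF sumjH[of n], of "{j}"] q0 V0nn by auto
      have b: "(\<rho> ^ nat \<bar>j\<bar> * U0 (n+j)) powr p = q ^ nat \<bar>j\<bar> * V0 (n+j)"
        using r by (simp add: powr_mult pow_powr q_def V0_def)
      have "\<rho> ^ nat \<bar>j\<bar> * U0 (n+j) = ((\<rho> ^ nat \<bar>j\<bar> * U0 (n+j)) powr p) powr (1/p)"
        using p r nn[of "n+j"] by (simp add: powr_powr powr_one)
      also have "\<dots> \<le> H n powr (1/p)" unfolding b using p a q0 V0nn
        by (intro powr_mono2) auto
      finally show "\<rho> ^ nat \<bar>j\<bar> * U0 (n+j) \<le> H n powr (1/p)" .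
    qed simp
    moreover have "0 \<le> G n" unfolding G_def
      by (rule G_nn[OF nn bd r])
    ultimately have "G n powr p \<le> (H n powr (1/p)) powr p"
      using p by (intro powr_mono2) auto
    also have "\<dots> = H n" using p Hnn by (simp add: powr_powr powr_one)
    finally show ?thesis .
  qed
  show ?thesis
  proof (rule summable_on_comparison_test[OF Hsum])
    fix n :: int
    show "w n * (SUP j. \<rho> ^ nat \<bar>j\<bar> * U0 (n+j)) powr p \<le> infsum (\<lambda>j. f n j) UNIV"
      unfolding Heq using GH[of n] wpos[of n] by (simp add: G_def)
    show "0 \<le> w n * (SUP j. \<rho> ^ nat \<bar>j\<bar> * U0 (n+j)) powr p" using wpos[of n] by simp
  qed
qed



lemma gen_bound:
  fixes a b a' x1 x2 y1 y2 d e x0 :: complex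
  assumes M: "norm a \<le> M" "norm b \<le> M" "norm a' \<le> M" "norm y1 \<le> M" "norm y2 \<le> M"
  shows "norm ((1 - a*b)*(x1+x2) - (d*b + a'*e)*(y1+y2) - 2*x0)
         \<le> (1 + M^2) * (norm x1 + norm x2) + 2 * M^2 * (norm d + norm e) + 2 * norm x0"
proof -
  have M0: "0 \<le> M" using M(1) norm_ge_zero order_trans by blast
  have n1: "norm (1 - a*b) \<le> 1 + M^2"
  proof -
    have "norm (1 - a*b) \<le> norm (1::complex) + norm (a*b)" by (rule norm_triangle_ineq4)
    also have "norm (a*b) \<le> M * M" unfolding norm_mult using M M0 by (intro mult_mono) auto
    finally show ?thesis by (simp add: power2_eq_square)
  qed
  have n2: "norm (y1+y2) \<le> 2*M" using norm_triangle_ineq[of y1 y2] M by simp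
  have n3: "norm (d*b + a'*e) \<le> M * (norm d + norm e)"
  proof -
    have "norm (d*b + a'*e) \<le> norm d * norm b + norm a' * norm e"
      using norm_triangle_ineq[of "d*b" "a'*e"] by (simp add: norm_mult)
    also have "\<dots> \<le> norm d * M + M * norm e" using M M0 by (intro add_mono mult_mono) auto
    finally show ?thesis by (simp add: algebra_simps)
  qed
  have "norm ((1 - a*b)*(x1+x2) - (d*b + a'*e)*(y1+y2) - 2*x0)
        \<le> norm ((1 - a*b)*(x1+x2)) + norm ((d*b + a'*e)*(y1+y2)) + norm (2*x0)"
    using norm_triangle_ineq4[of "(1 - a*b)*(x1+x2) - (d*b + a'*e)*(y1+y2)" "2*x0"]
      norm_triangle_ineq4[of "(1 - a*b)*(x1+x2)" "(d*b + a'*e)*(y1+y2)"] by linarith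
  also have "norm ((1 - a*b)*(x1+x2)) \<le> (1 + M^2) * (norm x1 + norm x2)"
    unfolding norm_mult by (intro mult_mono n1 norm_triangle_ineq) auto
  also have "norm ((d*b + a'*e)*(y1+y2)) \<le> (M * (norm d + norm e)) * (2*M)"
    unfolding norm_mult by (intro mult_mono n2 n3) (use M0 in auto)
  also have "norm (2*x0) = 2 * norm x0" by (simp add: norm_mult)
  finally show ?thesis by (simp add: power2_eq_square algebra_simps)
qed

lemma gen_bound2:
  fixes M X Y Z Um U Up :: real
  assumes "0 \<le> M" "X \<le> Um + Up" "Y \<le> U" "Z \<le> U" "0 \<le> Z" "0 \<le> Um" "0 \<le> Up"
  shows "(1 + M^2) * X + 2 * M^2 * Y + 2 * Z \<le> (3 + 3*M^2) * (Um + U + Up)"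
proof -
  have m: "0 \<le> M^2" by simp
  have U0: "0 \<le> U" using assms by linarith
  have a: "(1 + M^2) * X \<le> (1 + M^2) * (Um + Up)" using assms m by (intro mult_left_mono) auto
  have b: "2 * M^2 * Y \<le> 2 * M^2 * U" using assms m by (intro mult_left_mono) auto
  have c: "(1 + M^2) * (Um + Up) \<le> (3 + 3*M^2) * (Um + Up)" using assms m by (intro mult_right_mono) auto
  have d: "(2 * M^2 + 2) * U \<le> (3 + 3*M^2) * U" using U0 m by (intro mult_right_mono) auto
  have e: "2 * M^2 * U + 2 * Z \<le> (2 * M^2 + 2) * U" using assms by (simp add: distrib_right)
  have f: "(3 + 3*M^2) * (Um + U + Up) = (3 + 3*M^2) * (Um + Up) + (3 + 3*M^2) * U" by (simp add: algebra_simps)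
  show ?thesis unfolding f using a b c d e by linarith
qed

lemma powr_sum_le:
  fixes x y p :: real assumes "0 \<le> x" "0 \<le> y" "0 < p"
  shows "(x+y) powr p \<le> 2 powr p * (x powr p + y powr p)"
proof -
  have "x + y \<le> 2 * max x y" by simp
  then have "(x+y) powr p \<le> (2 * max x y) powr p" using assms by (intro powr_mono2) auto
  also have "\<dots> = 2 powr p * max x y powr p" using assms by (simp add: powr_mult)
  also have "max x y powr p \<le> x powr p + y powr p" by (cases "x \<le> y") (auto simp: max_def)
  then have "2 powr p * max x y powr p \<le> 2 powr p * (x powr p + y powr p)" by simp
  finally show ?thesis .
qed



lemma solve_eq1:
  fixes v X a :: complex
  assumes "- \<i> * v - X + 2 * a = 0"
  shows "v = \<i> * (X - 2 * a)"
proof -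
  have "\<i> * (- \<i> * v - X + 2 * a) = 0" using assms by simp
  then have "v - \<i> * X + 2 * \<i> * a = 0" by (simp add: algebra_simps)
  then show ?thesis by (simp add: algebra_simps)
qed

lemma solve_eq2:
  fixes v Y b :: complex
  assumes "- \<i> * v + Y - 2 * b = 0"
  shows "v = - \<i> * (Y - 2 * b)"
proof -
  have "\<i> * (- \<i> * v + Y - 2 * b) = 0" using assms by simp
  then have "v + \<i> * Y - 2 * \<i> * b = 0" by (simp add: algebra_simps)
  then show ?thesis by (simp add: algebra_simps)
qed

lemma diff_id1:
  fixes v v' a b a' b' am ap am' ap' :: complex
  assumes "v = \<i> * ((1 - a*b)*(am+ap) - 2*a)" "v' = \<i> * ((1 - a'*b')*(am'+ap') - 2*a')"
  shows "v - v' = \<i> * ((1 - a*b)*((am-am')+(ap-ap')) - ((a-a')*b + a'*(b-b'))*(am'+ap') - 2*(a-a'))"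
  unfolding assms by (simp add: algebra_simps)

lemma diff_id2:
  fixes v v' a b a' b' bm bp bm' bp' :: complex
  assumes "v = - \<i> * ((1 - a*b)*(bm+bp) - 2*b)" "v' = - \<i> * ((1 - a'*b')*(bm'+bp') - 2*b')"
  shows "v - v' = - \<i> * ((1 - a*b)*((bm-bm')+(bp-bp')) - ((a-a')*b + a'*(b-b'))*(bm'+bp') - 2*(b-b'))"
  unfolding assms by (simp add: algebra_simps)

lemma full_bound:
  fixes a b a' b' am ap am' ap' bm bp bm' bp' v v' u u' :: complex and M :: real
  assumes e1: "- \<i> * v - (1 - a*b)*(am+ap) + 2*a = 0"
    and e2: "- \<i> * u + (1 - a*b)*(bm+bp) - 2*b = 0"
    and e1': "- \<i> * v' - (1 - a'*b')*(am'+ap') + 2*a' = 0"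
    and e2': "- \<i> * u' + (1 - a'*b')*(bm'+bp') - 2*b' = 0"
    and M: "norm a \<le> M" "norm b \<le> M" "norm a' \<le> M" "norm b' \<le> M"
       "norm am' \<le> M" "norm ap' \<le> M" "norm bm' \<le> M" "norm bp' \<le> M"
  defines "Um \<equiv> norm (am - am') + norm (bm - bm')"
    and "U \<equiv> norm (a - a') + norm (b - b')"
    and "Up \<equiv> norm (ap - ap') + norm (bp - bp')"
  shows "norm (v - v') \<le> (3 + 3*M^2) * (Um + U + Up)"
    and "norm (u - u') \<le> (3 + 3*M^2) * (Um + U + Up)"
proof -
  have M0: "0 \<le> M" using M(1) norm_ge_zero order_trans by blast
  have v: "v = \<i> * ((1 - a*b)*(am+ap) - 2*a)" using solve_eq1[of v "(1 - a*b)*(am+ap)" a] e1 by simp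
  have v': "v' = \<i> * ((1 - a'*b')*(am'+ap') - 2*a')" using solve_eq1[of v' "(1 - a'*b')*(am'+ap')" a'] e1' by simp
  have u: "u = - \<i> * ((1 - a*b)*(bm+bp) - 2*b)" using solve_eq2[of u "(1 - a*b)*(bm+bp)" b] e2 by simp
  have u': "u' = - \<i> * ((1 - a'*b')*(bm'+bp') - 2*b')" using solve_eq2[of u' "(1 - a'*b')*(bm'+bp')" b'] e2' by simp
  have "norm (v - v') = norm ((1 - a*b)*((am-am')+(ap-ap')) - ((a-a')*b + a'*(b-b'))*(am'+ap') - 2*(a-a'))"
    unfolding diff_id1[OF v v'] by (simp add: norm_mult)
  also have "\<dots> \<le> (1 + M^2) * (norm (am-am') + norm (ap-ap')) + 2 * M^2 * (norm (a-a') + norm (b-b')) + 2 * norm (a-a')"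
    by (rule gen_bound) (use M in auto)
  also have "\<dots> \<le> (3 + 3*M^2) * (Um + U + Up)"
    by (rule gen_bound2) (use M0 in \<open>auto simp: Um_def U_def Up_def\<close>)
  finally show "norm (v - v') \<le> (3 + 3*M^2) * (Um + U + Up)" .
  have "norm (u - u') = norm ((1 - a*b)*((bm-bm')+(bp-bp')) - ((a-a')*b + a'*(b-b'))*(bm'+bp') - 2*(b-b'))"
    unfolding diff_id2[OF u u'] by (simp add: norm_mult)
  also have "\<dots> \<le> (1 + M^2) * (norm (bm-bm') + norm (bp-bp')) + 2 * M^2 * (norm (a-a') + norm (b-b')) + 2 * norm (b-b')"
    by (rule gen_bound) (use M in auto)
  also have "\<dots> \<le> (3 + 3*M^2) * (Um + U + Up)"
    by (rule gen_bound2) (use M0 in \<open>auto simp: Um_def U_def Up_def\<close>)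
  finally show "norm (u - u') \<le> (3 + 3*M^2) * (Um + U + Up)" .
qed



theorem lemma2p3:
  fixes w :: "int \<Rightarrow> real" and p :: ereal and t0 T :: real
    and \<alpha> \<beta> \<alpha>' \<beta>' :: "int \<Rightarrow> real \<Rightarrow> complex"
  assumes w_ge: "\<forall>n. w n \<ge> 1"
    and w_ratio: "bdd_above (range (\<lambda>n. \<bar>w (n+1) / w n\<bar> + \<bar>w n / w (n+1)\<bar>))"
    and p: "1 \<le> p"
    and T: "T > 0"
    and sol1: "AL_solution t0 T \<alpha> \<beta>"
    and sol2: "AL_solution t0 T \<alpha>' \<beta>'"
    and fin0: "wnorm_finite w p (\<lambda>n. \<alpha> n t0 - \<alpha>' n t0) (\<lambda>n. \<beta> n t0 - \<beta>' n t0)"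
  shows "\<forall>t\<in>{t0-T<..<t0+T}. wnorm_finite w p (\<lambda>n. \<alpha> n t - \<alpha>' n t) (\<lambda>n. \<beta> n t - \<beta>' n t)"
proof (intro ballI)
  fix t assume t: "t \<in> {t0-T<..<t0+T}"
  define I where "I = {t0-T<..<t0+T}"
  have t0I: "t0 \<in> I" using T by (simp add: I_def)
  from sol1 obtain M1 where M1: "\<forall>n. \<forall>t\<in>I. norm (\<alpha> n t) \<le> M1 \<and> norm (\<beta> n t) \<le> M1"
    and D1: "\<forall>n. \<forall>t\<in>I. \<alpha> n differentiable at t \<and> \<beta> n differentiable at t"
    and E1: "\<forall>n. \<forall>t\<in>I.
        - \<i> * vector_derivative (\<alpha> n) (at t)
          - (1 - \<alpha> n t * \<beta> n t) * (\<alpha> (n-1) t + \<alpha> (n+1) t) + 2 * \<alpha> n t = 0 \<and>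
        - \<i> * vector_derivative (\<beta> n) (at t)
          + (1 - \<alpha> n t * \<beta> n t) * (\<beta> (n-1) t + \<beta> (n+1) t) - 2 * \<beta> n t = 0"
    unfolding AL_solution_def I_def by blast
  from sol2 obtain M2 where M2: "\<forall>n. \<forall>t\<in>I. norm (\<alpha>' n t) \<le> M2 \<and> norm (\<beta>' n t) \<le> M2"
    and D2: "\<forall>n. \<forall>t\<in>I. \<alpha>' n differentiable at t \<and> \<beta>' n differentiable at t"
    and E2: "\<forall>n. \<forall>t\<in>I.
        - \<i> * vector_derivative (\<alpha>' n) (at t)
          - (1 - \<alpha>' n t * \<beta>' n t) * (\<alpha>' (n-1) t + \<alpha>' (n+1) t) + 2 * \<alpha>' n t = 0 \<and>
        - \<i> * vector_derivative (\<beta>' n) (at t)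
          + (1 - \<alpha>' n t * \<beta>' n t) * (\<beta>' (n-1) t + \<beta>' (n+1) t) - 2 * \<beta>' n t = 0"
    unfolding AL_solution_def I_def by blast
  define M where "M = max M1 M2"
  have M0: "0 \<le> M" using M1 t0I unfolding M_def by (meson max.coboundedI1 norm_ge_zero order_trans)
  have bA: "norm (\<alpha> n s) \<le> M" "norm (\<beta> n s) \<le> M" "norm (\<alpha>' n s) \<le> M" "norm (\<beta>' n s) \<le> M"
    if "s \<in> I" for n s
    using M1 M2 that unfolding M_def by (meson max.coboundedI1 max.coboundedI2 order_trans)+
  define d where "d = (\<lambda>n s. \<alpha> n s - \<alpha>' n s)"
  define e where "e = (\<lambda>n s. \<beta> n s - \<beta>' n s)"
  define f' where "f' = (\<lambda>n s. vector_derivative (\<alpha> n) (at s) - vector_derivative (\<alpha>' n) (at s))"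
  define g' where "g' = (\<lambda>n s. vector_derivative (\<beta> n) (at s) - vector_derivative (\<beta>' n) (at s))"
  define U where "U = (\<lambda>n s. norm (d n s) + norm (e n s))"
  define c where "c = 3 + 3*M^2"
  have c0: "c > 0" unfolding c_def by (simp add: add_pos_nonneg)
  have df: "(d n has_vector_derivative f' n s) (at s)" if "s \<in> I" for n s
    unfolding d_def f'_def
    by (rule has_vector_derivative_diff) (use D1 D2 that in \<open>auto simp: vector_derivative_works[symmetric]\<close>)
  have dg: "(e n has_vector_derivative g' n s) (at s)" if "s \<in> I" for n s
    unfolding e_def g'_def
    by (rule has_vector_derivative_diff) (use D1 D2 that in \<open>auto simp: vector_derivative_works[symmetric]\<close>)
  have bfg: "norm (f' n s) \<le> c * (U (n-1) s + U n s + U (n+1) s) \<and>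
             norm (g' n s) \<le> c * (U (n-1) s + U n s + U (n+1) s)" if s: "s \<in> I" for n s
  proof -
    note fb = full_bound[of "vector_derivative (\<alpha> n) (at s)" "\<alpha> n s" "\<beta> n s" "\<alpha> (n-1) s" "\<alpha> (n+1) s"
        "vector_derivative (\<beta> n) (at s)" "\<beta> (n-1) s" "\<beta> (n+1) s"
        "vector_derivative (\<alpha>' n) (at s)" "\<alpha>' n s" "\<beta>' n s" "\<alpha>' (n-1) s" "\<alpha>' (n+1) s"
        "vector_derivative (\<beta>' n) (at s)" "\<beta>' (n-1) s" "\<beta>' (n+1) s" M]
    have pre: "- \<i> * vector_derivative (\<alpha> n) (at s) - (1 - \<alpha> n s * \<beta> n s) * (\<alpha> (n-1) s + \<alpha> (n+1) s) + 2 * \<alpha> n s = 0"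
      "- \<i> * vector_derivative (\<beta> n) (at s) + (1 - \<alpha> n s * \<beta> n s) * (\<beta> (n-1) s + \<beta> (n+1) s) - 2 * \<beta> n s = 0"
      "- \<i> * vector_derivative (\<alpha>' n) (at s) - (1 - \<alpha>' n s * \<beta>' n s) * (\<alpha>' (n-1) s + \<alpha>' (n+1) s) + 2 * \<alpha>' n s = 0"
      "- \<i> * vector_derivative (\<beta>' n) (at s) + (1 - \<alpha>' n s * \<beta>' n s) * (\<beta>' (n-1) s + \<beta>' (n+1) s) - 2 * \<beta>' n s = 0"
      using E1 E2 s by auto
    have Ms: "norm (\<alpha> n s) \<le> M" "norm (\<beta> n s) \<le> M" "norm (\<alpha>' n s) \<le> M" "norm (\<beta>' n s) \<le> M"
      "norm (\<alpha>' (n-1) s) \<le> M" "norm (\<alpha>' (n+1) s) \<le> M" "norm (\<beta>' (n-1) s) \<le> M" "norm (\<beta>' (n+1) s) \<le> M"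
      using bA s by auto
    from fb[OF pre Ms] show ?thesis
      by (simp add: f'_def g'_def U_def d_def e_def c_def)
  qed
  have UM: "U n s \<le> 4*M" if "s \<in> I" for n s
  proof -
    have "norm (d n s) \<le> 2*M" unfolding d_def using norm_triangle_ineq4[of "\<alpha> n s" "\<alpha>' n s"] bA[OF that, of n] by linarith
    moreover have "norm (e n s) \<le> 2*M" unfolding e_def using norm_triangle_ineq4[of "\<beta> n s" "\<beta>' n s"] bA[OF that, of n] by linarith
    ultimately show ?thesis by (simp add: U_def)
  qed
  have wpos: "w n > 0" for n using w_ge by (smt (verit))
  from w_ratio obtain B where B: "\<And>n. \<bar>w (n+1) / w n\<bar> + \<bar>w n / w (n+1)\<bar> \<le> B"
    unfolding bdd_above_def by auto
  define K where "K = max 1 B"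
  have K1: "K \<ge> 1" by (simp add: K_def)
  have Kw1: "w n \<le> K * w (n+1)" for n
  proof -
    have "0 \<le> w (n+1) / w n" using wpos[of n] wpos[of "n+1"] by simp
    then have "w n / w (n+1) \<le> K" using B[of n] wpos[of n] wpos[of "n+1"] unfolding K_def by (smt (verit, best) max.cobounded2 abs_of_nonneg divide_nonneg_nonneg less_imp_le)
    then show ?thesis using wpos[of "n+1"] by (simp add: pos_divide_le_eq)
  qed
  have Kw2: "w (n+1) \<le> K * w n" for n
  proof -
    have "0 \<le> w n / w (n+1)" using wpos[of n] wpos[of "n+1"] by simp
    then have "w (n+1) / w n \<le> K" using B[of n] wpos[of n] wpos[of "n+1"] unfolding K_def by (smt (verit, best) max.cobounded2 abs_of_nonneg divide_nonneg_nonneg less_imp_le)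
    then show ?thesis using wpos[of n] by (simp add: pos_divide_le_eq)
  qed
  have wsh: "w n \<le> K ^ nat \<bar>j\<bar> * w (n + j)" for n j
    by (rule weight_shift[where w=w and K=K]) (use Kw1 Kw2 wpos K1 in auto)
  define \<rho> where "\<rho> = 1 / (2*K)"
  have r: "0 < \<rho>" "\<rho> \<le> 1" using K1 by (auto simp: \<rho>_def)
  have rK: "\<rho> * K = 1/2" using K1 by (simp add: \<rho>_def)
  define U0 where "U0 = (\<lambda>n. U n t0)"
  have U0nn: "0 \<le> U0 n" for n by (simp add: U0_def U_def)
  have U0M: "U0 n \<le> 4*M" for n using UM[OF t0I] by (simp add: U0_def)
  define G where "G = (\<lambda>n. (SUP j. \<rho> ^ nat \<bar>j\<bar> * U0 (n+j)))"
  define \<mu> where "\<mu> = 1 + 2/\<rho>"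
  have mu0: "\<mu> > 0" using r by (simp add: \<mu>_def add_pos_pos)
  have GA: "G (n-1) + G n + G (n+1) \<le> \<mu> * G n" for n
    unfolding G_def \<mu>_def by (rule G_A[OF U0nn U0M r])
  have G0: "U n t0 \<le> G n" for n
    using G_ge[OF U0nn U0M r] by (simp add: G_def U0_def)
  have Gnn: "0 \<le> G n" for n
    unfolding G_def by (rule G_nn[OF U0nn U0M r])
  define E where "E = exp (2*c*\<mu>*\<bar>t-t0\<bar>)"
  have E0: "E > 0" by (simp add: E_def)
  have UG: "U n t \<le> E * G n" for n
    unfolding E_def
    by (rule core_both[OF c0 mu0 t, of t0 d f' e g' U "4*M"])
       (use T df dg bfg U_def UM G0 GA in \<open>auto simp: I_def\<close>)
  show "wnorm_finite w p (\<lambda>n. \<alpha> n t - \<alpha>' n t) (\<lambda>n. \<beta> n t - \<beta>' n t)"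
  proof (cases "p = \<infinity>")
    case True
    from fin0 True obtain B0 where B0: "\<And>n. w n * U0 n \<le> B0"
      unfolding wnorm_finite_def bdd_above_def U0_def U_def d_def e_def by auto
    have B00: "0 \<le> B0" using B0[of 0] wpos[of 0] U0nn[of 0] by (smt (verit) mult_nonneg_nonneg)
    have GB: "w n * G n \<le> B0" for n
    proof -
      have "G n \<le> B0 / w n"
        unfolding G_def
      proof (rule G_least[OF U0nn U0M r])
        fix j
        have "w n * (\<rho> ^ nat \<bar>j\<bar> * U0 (n+j)) \<le> (K ^ nat \<bar>j\<bar> * w (n+j)) * (\<rho> ^ nat \<bar>j\<bar> * U0 (n+j))"
          using wsh[of n j] r U0nn by (intro mult_right_mono) auto
        also have "\<dots> = (\<rho> * K) ^ nat \<bar>j\<bar> * (w (n+j) * U0 (n+j))" by (simp add: power_mult_distrib algebra_simps)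
        also have "\<dots> \<le> 1 * B0"
          using rK B0[of "n+j"] wpos[of "n+j"] U0nn[of "n+j"] B00
          by (intro mult_mono) (auto simp: power_le_one)
        finally show "\<rho> ^ nat \<bar>j\<bar> * U0 (n+j) \<le> B0 / w n" using wpos[of n] by (simp add: pos_le_divide_eq mult.commute)
      qed
      then show ?thesis using wpos[of n] by (simp add: pos_le_divide_eq mult.commute)
    qed
    have "w n * (norm (\<alpha> n t - \<alpha>' n t) + norm (\<beta> n t - \<beta>' n t)) \<le> E * B0" for n
    proof -
      have "w n * U n t \<le> w n * (E * G n)" using UG[of n] wpos[of n] by (intro mult_left_mono) auto
      also have "\<dots> = E * (w n * G n)" by simp
      also have "\<dots> \<le> E * B0" using GB[of n] E0 by (intro mult_left_mono) auto
      finally show ?thesis by (simp add: U_def d_def e_def)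
    qed
    then show ?thesis using True unfolding wnorm_finite_def bdd_above_def by auto
  next
    case False
    with p obtain q where pq: "p = ereal q" and q1: "1 \<le> q"
      by (cases p) auto
    have rq: "real_of_ereal p = q" using pq by simp
    have S0': "(\<lambda>n. w n * (norm (d n t0) powr q + norm (e n t0) powr q)) summable_on UNIV"
      using fin0 False unfolding wnorm_finite_def rq d_def e_def by simp
    have S0: "(\<lambda>n. w n * U0 n powr q) summable_on UNIV"
    proof (rule summable_on_comparison_test[OF summable_on_cmult_right[OF S0', of "2 powr q"]])
      fix n :: int
      have "U0 n powr q \<le> 2 powr q * (norm (d n t0) powr q + norm (e n t0) powr q)"
        unfolding U0_def U_def using q1 by (intro powr_sum_le) auto
      then show "w n * U0 n powr q \<le> 2 powr q * (w n * (norm (d n t0) powr q + norm (e n t0) powr q))"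
        using wpos[of n] by (simp add: mult_left_mono mult.left_commute)
      show "0 \<le> w n * U0 n powr q" using wpos[of n] by simp
    qed
    have GS: "(\<lambda>n. w n * G n powr q) summable_on UNIV"
      unfolding G_def
      by (rule G_summable[OF q1 U0nn U0M r K1 _ wpos wsh S0]) (simp add: rK)
    have "(\<lambda>n. w n * (norm (d n t) powr q + norm (e n t) powr q)) summable_on UNIV"
    proof (rule summable_on_comparison_test[OF summable_on_cmult_right[OF GS, of "2 * E powr q"]])
      fix n :: int
      have "norm (d n t) powr q \<le> U n t powr q" unfolding U_def using q1 by (intro powr_mono2) auto
      moreover have "norm (e n t) powr q \<le> U n t powr q" unfolding U_def using q1 by (intro powr_mono2) auto
      moreover have "U n t powr q \<le> (E * G n) powr q" using UG[of n] q1 by (intro powr_mono2) (auto simp: U_def)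
      moreover have "(E * G n) powr q = E powr q * G n powr q" by (simp add: powr_mult)
      ultimately have "norm (d n t) powr q + norm (e n t) powr q \<le> 2 * E powr q * G n powr q" by simp
      then show "w n * (norm (d n t) powr q + norm (e n t) powr q) \<le> 2 * E powr q * (w n * G n powr q)"
        using wpos[of n] by (simp add: mult_left_mono mult.left_commute)
      show "0 \<le> w n * (norm (d n t) powr q + norm (e n t) powr q)" using wpos[of n] by simp
    qed
    then show ?thesis using False unfolding wnorm_finite_def rq d_def e_def by simp
  qed
qed

end
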